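(* Let $U$ be a finite set, $\alpha>1$ and $\delta\in[0,1)$. For probability distributions $P,Q$ on $U$, $e^{(\alpha-1)D^\delta_\alpha(P\|Q)}$ equals the optimal value of the program $$\min_{P',Q'} \sum_x P'(x)^\alpha Q'(x)^{1-\alpha}\quad\text{s.t.}\quad \sum_x P'(x)=\sum_x Q'(x)=1,\ 0\le P'(x)\le \tfrac{P(x)}{1-\delta},\ 0\le Q'(x)\le\tfrac{Q(x)}{1-\delta}\ \ \forall x,$$ the objective is jointly convex in $(P,Q,P',Q')$ over a convex feasible set, and consequently $(P,Q)\mapsto e^{(\alpha-1)D^\delta_\alpha(P\|Q)}$ is jointly convex.
   Context: For $\alpha>1$, $D_\alpha(P\|Q)=\frac{1}{\alpha-1}\log\sum_x P(x)^\alpha Q(x)^{1-\alpha}$ (with $0^\alpha 0^{1-\alpha}=0$ and $u^\alpha 0^{1-\alpha}=\infty$ for $u>0$), and $D^\delta_\alpha(P\|Q)=\inf\{D_\alpha(P'\|Q'): P=(1-\delta)P'+\delta P'',\ Q=(1-\delta)Q'+\delta Q''\}$, the infimum over probability distributions $P',P'',Q',Q''$ on $U$. *)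

theory Defs
  imports "HOL-Analysis.Analysis"
begin

text \<open>Probability distributions on a finite type (the finite set U is the universe of the type).\<close>
definition is_dist :: "('a::finite \<Rightarrow> real) \<Rightarrow> bool" where
  "is_dist P \<longleftrightarrow> (\<forall>x. 0 \<le> P x) \<and> (\<Sum>x\<in>UNIV. P x) = 1"

definition renyi_term :: "real \<Rightarrow> real \<Rightarrow> real \<Rightarrow> ereal" where
  "renyi_term \<alpha> u v =
     (if u = 0 \<and> v = 0 then 0
      else if v = 0 then \<infinity>
      else ereal (u powr \<alpha> * v powr (1 - \<alpha>)))"

definition renyi_sum :: "real \<Rightarrow> ('a::finite \<Rightarrow> real) \<Rightarrow> ('a \<Rightarrow> real) \<Rightarrow> ereal" where
  "renyi_sum \<alpha> P Q = (\<Sum>x\<in>UNIV. renyi_term \<alpha> (P x) (Q x))"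

definition renyi_div :: "real \<Rightarrow> ('a::finite \<Rightarrow> real) \<Rightarrow> ('a \<Rightarrow> real) \<Rightarrow> ereal" where
  "renyi_div \<alpha> P Q =
     (if renyi_sum \<alpha> P Q = \<infinity> then \<infinity>
      else ereal (ln (real_of_ereal (renyi_sum \<alpha> P Q)) / (\<alpha> - 1)))"

definition smooth_renyi :: "real \<Rightarrow> real \<Rightarrow> ('a::finite \<Rightarrow> real) \<Rightarrow> ('a \<Rightarrow> real) \<Rightarrow> ereal" where
  "smooth_renyi \<alpha> \<delta> P Q =
     (INF (P', P'', Q', Q'') \<in> {(P', P'', Q', Q'').
          is_dist P' \<and> is_dist P'' \<and> is_dist Q' \<and> is_dist Q'' \<and>
          P = (\<lambda>x. (1 - \<delta>) * P' x + \<delta> * P'' x) \<and>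
          Q = (\<lambda>x. (1 - \<delta>) * Q' x + \<delta> * Q'' x)}.
        renyi_div \<alpha> P' Q')"

fun exp_ereal :: "ereal \<Rightarrow> ereal" where
  "exp_ereal (ereal r) = ereal (exp r)"
| "exp_ereal PInfty = PInfty"
| "exp_ereal MInfty = 0"

definition smooth_feasible :: "real \<Rightarrow> ('a::finite \<Rightarrow> real) \<Rightarrow> ('a \<Rightarrow> real)
    \<Rightarrow> ('a \<Rightarrow> real) \<Rightarrow> ('a \<Rightarrow> real) \<Rightarrow> bool" where
  "smooth_feasible \<delta> P Q P' Q' \<longleftrightarrow>
     (\<Sum>x\<in>UNIV. P' x) = 1 \<and> (\<Sum>x\<in>UNIV. Q' x) = 1 \<and>
     (\<forall>x. 0 \<le> P' x \<and> P' x \<le> P x / (1 - \<delta>) \<and> 0 \<le> Q' x \<and> Q' x \<le> Q x / (1 - \<delta>))"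

definition joint_feasible :: "real \<Rightarrow> (('a::finite \<Rightarrow> real) \<times> ('a \<Rightarrow> real) \<times> ('a \<Rightarrow> real) \<times> ('a \<Rightarrow> real)) set" where
  "joint_feasible \<delta> = {(P, Q, P', Q'). is_dist P \<and> is_dist Q \<and> smooth_feasible \<delta> P Q P' Q'}"

definition cmix :: "real \<Rightarrow> ('a \<Rightarrow> real) \<Rightarrow> ('a \<Rightarrow> real) \<Rightarrow> ('a \<Rightarrow> real)" where
  "cmix t f g = (\<lambda>x. t * f x + (1 - t) * g x)"

end

theory Submission
  imports Defs
begin

lemma powr_convex0:
  fixes \<alpha> x y l :: real
  assumes "\<alpha> \<ge> 1" "0 \<le> x" "0 \<le> y" "0 \<le> l" "l \<le> 1"
  shows "(l*x + (1-l)*y) powr \<alpha> \<le> l * x powr \<alpha> + (1-l) * y powr \<alpha>"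
proof -
  have pl: "z powr \<alpha> \<le> z" if "0 \<le> z" "z \<le> 1" for z :: real
    by (metis assms(1) that powr_mono' powr_one_gt_zero_iff)
  consider "x > 0" "y > 0" | "x = 0" | "y = 0" using assms by linarith
  then show ?thesis
  proof cases
    case 1
    have "((1 - (1-l)) *\<^sub>R x + (1-l) *\<^sub>R y) powr \<alpha> \<le> (1 - (1-l)) * x powr \<alpha> + (1-l) * y powr \<alpha>"
      using convex_onD[OF powr_convex[OF assms(1)], of "1-l" x y] 1 assms by auto
    then show ?thesis by simp
  next
    case 2
    have "(1-l) powr \<alpha> \<le> 1 - l" using pl assms by simp
    then show ?thesis using 2 assms
      by (simp add: powr_mult mult_right_mono)
  next
    case 3
    have "l powr \<alpha> \<le> l" using pl assms by simp
    then show ?thesis using 3 assms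
      by (simp add: powr_mult mult_right_mono)
  qed
qed

lemma persp_real:
  fixes \<alpha> t u1 u2 v1 v2 :: real
  assumes "\<alpha> \<ge> 1" "0 \<le> u1" "0 \<le> u2" "0 \<le> v1" "0 \<le> v2" "v1 = 0 \<Longrightarrow> u1 = 0" "v2 = 0 \<Longrightarrow> u2 = 0"
    "0 \<le> t" "t \<le> 1"
  shows "(t* v1 + (1-t)* v2) * ((t* u1 + (1-t)* u2) / (t* v1 + (1-t)* v2)) powr \<alpha>
     \<le> t * (v1 * (u1/v1) powr \<alpha>) + (1-t) * (v2 * (u2/v2) powr \<alpha>)"
proof -
  define v where "v = t* v1 + (1-t)* v2"
  have v0: "v \<ge> 0" using assms unfolding v_def by simp
  show ?thesis
  proof (cases "v = 0")
    case True
    then show ?thesis using assms by (simp add: v_def[symmetric])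
  next
    case False
    then have vp: "v > 0" using v0 by simp
    define l where "l = t* v1/v"
    have l1: "1 - l = (1-t)* v2/v" using vp unfolding l_def v_def by (simp add: field_simps)
    have tv: "t * v1 \<le> v" "0 \<le> t * v1" using assms unfolding v_def by auto
    have l0: "0 \<le> l" "l \<le> 1" using vp tv unfolding l_def by (auto simp: field_simps)
    have e1: "l * (u1/v1) = t* u1/v" using assms(6) vp unfolding l_def by (cases "v1 = 0") auto
    have e2: "(1-l) * (u2/v2) = (1-t)* u2/v" using assms(7) vp unfolding l1 by (cases "v2 = 0") auto
    have "(t* u1 + (1-t)* u2) / v = l * (u1/v1) + (1-l)*(u2/v2)"
      using e1 e2 by (simp add: add_divide_distrib)
    then have "v * ((t* u1 + (1-t)* u2) / v) powr \<alpha> \<le> v * (l * (u1/v1) powr \<alpha> + (1-l) * (u2/v2) powr \<alpha>)"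
      using powr_convex0[OF assms(1) _ _ l0, of "u1/v1" "u2/v2"] assms vp
      by (intro mult_left_mono) auto
    also have "\<dots> = t * (v1 * (u1/v1) powr \<alpha>) + (1-t) * (v2 * (u2/v2) powr \<alpha>)"
      using vp unfolding l1 unfolding l_def by (simp add: field_simps)
    finally show ?thesis unfolding v_def .
  qed
qed

lemma powr_persp:
  fixes \<alpha> u v :: real
  assumes "0 \<le> u" "0 < v"
  shows "u powr \<alpha> * v powr (1 - \<alpha>) = v * (u/v) powr \<alpha>"
  using assms by (simp add: powr_divide powr_diff field_simps)

lemma rt_nonneg: "0 \<le> renyi_term \<alpha> u v"
  unfolding renyi_term_def by auto

lemma rt_eq:
  fixes u v :: real
  assumes "0 \<le> u" "0 \<le> v" "v = 0 \<Longrightarrow> u = 0"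
  shows "renyi_term \<alpha> u v = ereal (v * (u/v) powr \<alpha>)"
  using assms powr_persp[of u v \<alpha>] unfolding renyi_term_def by auto

lemma term_convex:
  fixes \<alpha> t u1 u2 v1 v2 :: real
  assumes "\<alpha> \<ge> 1" "0 \<le> u1" "0 \<le> u2" "0 \<le> v1" "0 \<le> v2" "0 \<le> t" "t \<le> 1"
  shows "renyi_term \<alpha> (t * u1 + (1-t) * u2) (t * v1 + (1-t) * v2)
     \<le> ereal t * renyi_term \<alpha> u1 v1 + ereal (1-t) * renyi_term \<alpha> u2 v2"
proof -
  consider "t = 0" | "t = 1" | "0 < t" "t < 1" using assms by linarith
  then show ?thesis
  proof cases
    case 1 then show ?thesis by (simp add: zero_ereal_def[symmetric])
  next
    case 2 then show ?thesis by (simp add: zero_ereal_def[symmetric])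
  next
    case 3
    show ?thesis
    proof (cases "(v1 = 0 \<and> u1 \<noteq> 0) \<or> (v2 = 0 \<and> u2 \<noteq> 0)")
      case True
      then have "ereal t * renyi_term \<alpha> u1 v1 + ereal (1-t) * renyi_term \<alpha> u2 v2 = \<infinity>"
        using 3 rt_nonneg[of \<alpha> u1 v1] rt_nonneg[of \<alpha> u2 v2]
        by (auto simp: renyi_term_def)
      then show ?thesis by (simp only: ereal_less_eq(1))
    next
      case False
      have m0: "t * v1 + (1-t) * v2 = 0 \<Longrightarrow> t * u1 + (1-t) * u2 = 0"
      proof -
        assume h: "t * v1 + (1-t) * v2 = 0"
        have "t * v1 \<ge> 0" "(1-t) * v2 \<ge> 0" using 3 assms by auto
        then have "t * v1 = 0" "(1-t) * v2 = 0" using h by linarith+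
        then have "v1 = 0" "v2 = 0" using 3 by auto
        then show ?thesis using False by simp
      qed
      have "renyi_term \<alpha> (t * u1 + (1-t) * u2) (t * v1 + (1-t) * v2)
          = ereal ((t * v1 + (1-t) * v2) * ((t * u1 + (1-t) * u2) / (t * v1 + (1-t) * v2)) powr \<alpha>)"
        using assms 3 m0 by (intro rt_eq) auto
      also have "\<dots> \<le> ereal (t * (v1 * (u1/v1) powr \<alpha>) + (1-t) * (v2 * (u2/v2) powr \<alpha>))"
        unfolding ereal_less_eq(3) using False by (intro persp_real assms) auto
      also have "\<dots> = ereal t * renyi_term \<alpha> u1 v1 + ereal (1-t) * renyi_term \<alpha> u2 v2"
        using assms False by (simp add: rt_eq)
      finally show ?thesis .
    qed
  qed
qed

lemma exp_ereal_inf1[simp]: "exp_ereal \<infinity> = \<infinity>"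
  by (metis exp_ereal.simps(2) infinity_ereal_def)
lemma exp_ereal_inf2[simp]: "exp_ereal (-\<infinity>) = 0"
  by (metis exp_ereal.simps(3) uminus_ereal.simps(2) infinity_ereal_def)

lemma inf_iso:
  fixes g :: "ereal \<Rightarrow> ereal" and c :: ereal
  assumes mono: "\<And>x y. g x \<le> g y \<longleftrightarrow> x \<le> y"
    and surj: "\<And>y. c < y \<Longrightarrow> \<exists>z. y = g z" and lb: "\<And>x. c \<le> g x"
  shows "g (Inf S) = (INF s\<in>S. g s)"
proof (rule antisym)
  show "g (Inf S) \<le> (INF s\<in>S. g s)"
    by (rule INF_greatest) (simp add: mono Inf_lower)
next
  show "(INF s\<in>S. g s) \<le> g (Inf S)"
  proof (rule ccontr)
    assume "\<not> (INF s\<in>S. g s) \<le> g (Inf S)"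
    then have lt: "g (Inf S) < (INF s\<in>S. g s)" by simp
    then obtain y where y: "g (Inf S) < y" "y < (INF s\<in>S. g s)" using dense by blast
    then have "c < y" using lb[of "Inf S"] by simp
    then obtain z where z: "y = g z" using surj by blast
    have "z \<le> s" if "s \<in> S" for s
    proof -
      have "g z \<le> g s" using y(2) z that by (metis INF_lower less_imp_le order_trans)
      then show ?thesis using mono by simp
    qed
    then have "z \<le> Inf S" by (rule Inf_greatest)
    then have "g z \<le> g (Inf S)" using mono by simp
    then show False using y z by simp
  qed
qed

lemma exp_iso:
  fixes a :: real assumes "a > 0"
  shows "exp_ereal (ereal a * Inf S) = (INF s\<in>S. exp_ereal (ereal a * s))"
proof (rule inf_iso[where c = 0])
  fix x y :: ereal
  show "exp_ereal (ereal a * x) \<le> exp_ereal (ereal a * y) \<longleftrightarrow> x \<le> y"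
    using assms by (cases x; cases y) auto
next
  fix y :: ereal assume "0 < y"
  then show "\<exists>z. y = exp_ereal (ereal a * z)"
  proof (cases y)
    case (real r)
    then have "y = exp_ereal (ereal a * ereal (ln r / a))" using \<open>0 < y\<close> assms by simp
    then show ?thesis by blast
  next
    case PInf
    then have "y = exp_ereal (ereal a * \<infinity>)" using assms by simp
    then show ?thesis by blast
  qed (use \<open>0 < y\<close> in auto)
next
  fix x :: ereal show "0 \<le> exp_ereal (ereal a * x)"
    using assms by (cases x) auto
qed

lemma mult_iso:
  fixes a :: real assumes "a > 0"
  shows "ereal a * Inf S = (INF s\<in>S. ereal a * s)"
proof (rule inf_iso[where c = "-\<infinity>"])
  fix x y :: ereal
  show "ereal a * x \<le> ereal a * y \<longleftrightarrow> x \<le> y"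
    using assms by (cases x; cases y) auto
next
  fix y :: ereal assume "-\<infinity> < y"
  then show "\<exists>z. y = ereal a * z"
  proof (cases y)
    case (real r)
    then have "y = ereal a * ereal (r / a)" using assms by simp
    then show ?thesis by blast
  next
    case PInf
    then have "y = ereal a * \<infinity>" using assms by simp
    then show ?thesis by blast
  qed (use \<open>-\<infinity> < y\<close> in auto)
qed simp

lemma rs_pos:
  fixes P' Q' :: "'a::finite \<Rightarrow> real"
  assumes "\<alpha> > 1" "is_dist P'" "\<And>x. 0 \<le> Q' x"
  shows "exp_ereal (ereal (\<alpha> - 1) * renyi_div \<alpha> P' Q') = renyi_sum \<alpha> P' Q'"
proof -
  obtain x where x: "P' x > 0"
  proof (rule ccontr)
    assume "\<not> thesis"
    then have "\<forall>x. P' x \<le> 0" using that by (metis not_le)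
    then have "\<forall>x. P' x = 0" using assms(2) unfolding is_dist_def by (meson order_antisym)
    then show False using assms(2) unfolding is_dist_def by simp
  qed
  have tx: "renyi_term \<alpha> (P' x) (Q' x) > 0"
    using x assms(3)[of x] unfolding renyi_term_def by auto
  have le: "renyi_term \<alpha> (P' x) (Q' x) \<le> renyi_sum \<alpha> P' Q'"
  proof -
    have "renyi_sum \<alpha> P' Q' = renyi_term \<alpha> (P' x) (Q' x) + (\<Sum>y\<in>UNIV - {x}. renyi_term \<alpha> (P' y) (Q' y))"
      unfolding renyi_sum_def by (simp add: sum.remove)
    moreover have "0 \<le> (\<Sum>y\<in>UNIV - {x}. renyi_term \<alpha> (P' y) (Q' y))"
      by (rule sum_nonneg) (simp add: rt_nonneg)
    ultimately show ?thesis by (simp add: add_increasing2)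
  qed
  show ?thesis
  proof (cases "renyi_sum \<alpha> P' Q' = \<infinity>")
    case True
    then show ?thesis using assms(1) by (simp add: renyi_div_def)
  next
    case False
    have "renyi_sum \<alpha> P' Q' > 0" using tx le by simp
    with False obtain r where r: "renyi_sum \<alpha> P' Q' = ereal r" "r > 0"
      by (cases "renyi_sum \<alpha> P' Q'") auto
    then show ?thesis using assms(1) by (simp add: renyi_div_def)
  qed
qed

lemma dist_cmix:
  assumes "is_dist P1" "is_dist P2" "0 \<le> t" "t \<le> 1"
  shows "is_dist (cmix t P1 P2)"
  using assms unfolding is_dist_def cmix_def
  by (simp add: sum.distrib sum_distrib_left[symmetric])

lemma feas_cmix:
  assumes "smooth_feasible \<delta> P1 Q1 P1' Q1'" "smooth_feasible \<delta> P2 Q2 P2' Q2'" "0 \<le> t" "t \<le> 1" "\<delta> < 1"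
  shows "smooth_feasible \<delta> (cmix t P1 P2) (cmix t Q1 Q2) (cmix t P1' P2') (cmix t Q1' Q2')"
proof -
  have b: "t * a1 + (1-t) * a2 \<le> (t * b1 + (1-t) * b2) / (1 - \<delta>)"
    if "a1 \<le> b1 / (1 - \<delta>)" "a2 \<le> b2 / (1 - \<delta>)" for a1 a2 b1 b2 :: real
  proof -
    have "t * a1 + (1-t) * a2 \<le> t * (b1 / (1 - \<delta>)) + (1-t) * (b2 / (1 - \<delta>))"
      using that assms by (intro add_mono mult_left_mono) auto
    also have "\<dots> = (t * b1 + (1-t) * b2) / (1 - \<delta>)" by (simp add: add_divide_distrib)
    finally show ?thesis .
  qed
  show ?thesis using assms unfolding smooth_feasible_def cmix_def
    by (auto simp: sum.distrib sum_distrib_left[symmetric] intro!: b)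
qed

lemma rs_convex:
  fixes P1' P2' Q1' Q2' :: "'a::finite \<Rightarrow> real"
  assumes "\<alpha> \<ge> 1" "\<And>x. 0 \<le> P1' x" "\<And>x. 0 \<le> P2' x" "\<And>x. 0 \<le> Q1' x" "\<And>x. 0 \<le> Q2' x"
    "0 \<le> t" "t \<le> 1"
  shows "renyi_sum \<alpha> (cmix t P1' P2') (cmix t Q1' Q2')
     \<le> ereal t * renyi_sum \<alpha> P1' Q1' + ereal (1 - t) * renyi_sum \<alpha> P2' Q2'"
proof -
  have "renyi_sum \<alpha> (cmix t P1' P2') (cmix t Q1' Q2')
     \<le> (\<Sum>x\<in>UNIV. ereal t * renyi_term \<alpha> (P1' x) (Q1' x) + ereal (1-t) * renyi_term \<alpha> (P2' x) (Q2' x))"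
    unfolding renyi_sum_def cmix_def
    by (rule sum_mono) (intro term_convex assms)
  also have "\<dots> = (\<Sum>x\<in>UNIV. ereal t * renyi_term \<alpha> (P1' x) (Q1' x)) + (\<Sum>x\<in>UNIV. ereal (1-t) * renyi_term \<alpha> (P2' x) (Q2' x))"
    by (rule sum.distrib)
  also have "\<dots> = ereal t * renyi_sum \<alpha> P1' Q1' + ereal (1 - t) * renyi_sum \<alpha> P2' Q2'"
    unfolding renyi_sum_def by (simp add: sum_ereal_right_distrib rt_nonneg)
  finally show ?thesis .
qed

lemma split_dist:
  fixes P P' :: "'a::finite \<Rightarrow> real"
  assumes "0 \<le> \<delta>" "\<delta> < 1" "is_dist P" "(\<Sum>x\<in>UNIV. P' x) = 1"
    "\<And>x. 0 \<le> P' x" "\<And>x. P' x \<le> P x / (1 - \<delta>)"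
  shows "\<exists>P''. is_dist P'' \<and> P = (\<lambda>x. (1 - \<delta>) * P' x + \<delta> * P'' x)"
proof (cases "\<delta> = 0")
  case True
  have le: "P' x \<le> P x" for x using assms(6)[of x] True by simp
  have "(\<Sum>x\<in>UNIV. P x - P' x) = 0"
    using assms(3,4) unfolding is_dist_def by (simp add: sum_subtractf)
  then have "\<forall>x\<in>UNIV. P x - P' x = 0"
    by (subst sum_nonneg_eq_0_iff[symmetric]) (auto simp: le)
  then have "P = P'" by auto
  then show ?thesis using True assms(3) by auto
next
  case False
  then have dp: "\<delta> > 0" using assms by simp
  define P'' where "P'' = (\<lambda>x. (P x - (1 - \<delta>) * P' x) / \<delta>)"
  have b: "(1 - \<delta>) * P' x \<le> P x" for x using assms(6)[of x] assms(2) by (simp add: le_divide_eq mult.commute)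
  have "is_dist P''"
    unfolding is_dist_def P''_def
  proof
    show "\<forall>x. 0 \<le> (P x - (1 - \<delta>) * P' x) / \<delta>" using b dp by simp
    have "(\<Sum>x\<in>UNIV. (P x - (1 - \<delta>) * P' x) / \<delta>) = ((\<Sum>x\<in>UNIV. P x) - (1 - \<delta>) * (\<Sum>x\<in>UNIV. P' x)) / \<delta>"
      by (simp add: sum_divide_distrib[symmetric] sum_subtractf sum_distrib_left)
    then show "(\<Sum>x\<in>UNIV. (P x - (1 - \<delta>) * P' x) / \<delta>) = 1"
      using assms(3,4) dp unfolding is_dist_def by simp
  qed
  moreover have "P = (\<lambda>x. (1 - \<delta>) * P' x + \<delta> * P'' x)"
    unfolding P''_def using dp by auto
  ultimately show ?thesis by blast
qed

lemma unsplit_dist: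
  fixes P P' P'' :: "'a::finite \<Rightarrow> real"
  assumes "0 \<le> \<delta>" "\<delta> < 1" "is_dist P''" "P = (\<lambda>x. (1 - \<delta>) * P' x + \<delta> * P'' x)"
  shows "P' x \<le> P x / (1 - \<delta>)"
proof -
  have "0 \<le> \<delta> * P'' x" using assms(1,3) unfolding is_dist_def by simp
  then have "(1 - \<delta>) * P' x \<le> P x" using assms(4) by simp
  then show ?thesis using assms(2) by (simp add: le_divide_eq mult.commute)
qed

lemma rs_nonneg: "0 \<le> renyi_sum \<alpha> P Q"
  unfolding renyi_sum_def by (rule sum_nonneg) (simp add: rt_nonneg)

lemma self_feasible:
  assumes "is_dist P" "is_dist Q" "0 \<le> \<delta>" "\<delta> < 1"
  shows "smooth_feasible \<delta> P Q P Q"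
proof -
  have "a \<le> a / (1 - \<delta>)" if "0 \<le> a" for a :: real
    using that assms(3,4) by (simp add: le_divide_eq mult_left_le)
  then show ?thesis using assms unfolding smooth_feasible_def is_dist_def by auto
qed

lemma part1:
  fixes P Q :: "'a::finite \<Rightarrow> real"
  assumes "\<alpha> > 1" "0 \<le> \<delta>" "\<delta> < 1" "is_dist P" "is_dist Q"
  shows "exp_ereal (ereal (\<alpha> - 1) * smooth_renyi \<alpha> \<delta> P Q)
    = (INF (P', Q') \<in> {(P', Q'). smooth_feasible \<delta> P Q P' Q'}. renyi_sum \<alpha> P' Q')"
proof -
  define S :: "(('a\<Rightarrow>real)\<times>('a\<Rightarrow>real)\<times>('a\<Rightarrow>real)\<times>('a\<Rightarrow>real)) set" where
    "S = {(P', P'', Q', Q''). is_dist P' \<and> is_dist P'' \<and> is_dist Q' \<and> is_dist Q'' \<and>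
          P = (\<lambda>x. (1 - \<delta>) * P' x + \<delta> * P'' x) \<and>
          Q = (\<lambda>x. (1 - \<delta>) * Q' x + \<delta> * Q'' x)}"
  define f where "f = (\<lambda>(P'::'a\<Rightarrow>real, P''::'a\<Rightarrow>real, Q'::'a\<Rightarrow>real, Q''::'a\<Rightarrow>real). renyi_div \<alpha> P' Q')"
  define pr where "pr = (\<lambda>(P'::'a\<Rightarrow>real, P''::'a\<Rightarrow>real, Q'::'a\<Rightarrow>real, Q''::'a\<Rightarrow>real). (P', Q'))"
  define rs where "rs = (\<lambda>(P'::'a\<Rightarrow>real, Q'::'a\<Rightarrow>real). renyi_sum \<alpha> P' Q')"
  have sr: "smooth_renyi \<alpha> \<delta> P Q = Inf (f ` S)" unfolding smooth_renyi_def S_def f_def ..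
  have FS: "pr ` S = {(P', Q'). smooth_feasible \<delta> P Q P' Q'}"
  proof (intro equalityI subsetI)
    fix z assume "z \<in> pr ` S"
    then obtain a b c d where z: "z = (a, c)" and abcd: "(a,b,c,d) \<in> S" unfolding pr_def by auto
    then have h: "is_dist a" "is_dist b" "is_dist c" "is_dist d"
      "P = (\<lambda>x. (1 - \<delta>) * a x + \<delta> * b x)" "Q = (\<lambda>x. (1 - \<delta>) * c x + \<delta> * d x)"
      unfolding S_def by auto
    show "z \<in> {(P', Q'). smooth_feasible \<delta> P Q P' Q'}"
      unfolding z using h unsplit_dist[OF assms(2,3) h(2) h(5)] unsplit_dist[OF assms(2,3) h(4) h(6)]
      by (auto simp: smooth_feasible_def is_dist_def)
  next
    fix z assume "z \<in> {(P', Q'). smooth_feasible \<delta> P Q P' Q'}"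
    then obtain a c where z: "z = (a, c)" and sf: "smooth_feasible \<delta> P Q a c" by auto
    obtain b where b: "is_dist b" "P = (\<lambda>x. (1 - \<delta>) * a x + \<delta> * b x)"
      using split_dist[OF assms(2,3,4), of a] sf unfolding smooth_feasible_def by auto
    obtain d where d: "is_dist d" "Q = (\<lambda>x. (1 - \<delta>) * c x + \<delta> * d x)"
      using split_dist[OF assms(2,3,5), of c] sf unfolding smooth_feasible_def by auto
    have "is_dist a" "is_dist c" using sf unfolding smooth_feasible_def is_dist_def by auto
    then have "(a,b,c,d) \<in> S" unfolding S_def using b d by auto
    then show "z \<in> pr ` S" unfolding z pr_def by (force intro: image_eqI[of _ _ "(a,b,c,d)"])
  qed
  have "exp_ereal (ereal (\<alpha> - 1) * smooth_renyi \<alpha> \<delta> P Q) = (INF y\<in>S. exp_ereal (ereal (\<alpha> - 1) * f y))"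
    unfolding sr using assms(1) by (subst exp_iso) (simp_all add: image_image)
  also have "\<dots> = (INF y\<in>S. rs (pr y))"
  proof (rule INF_cong[OF refl])
    fix y assume "y \<in> S"
    then obtain a b c d where y: "y = (a,b,c,d)" and "is_dist a" "is_dist c" unfolding S_def by auto
    then show "exp_ereal (ereal (\<alpha> - 1) * f y) = rs (pr y)"
      using rs_pos[OF assms(1), of a c] by (simp add: f_def rs_def pr_def is_dist_def)
  qed
  also have "\<dots> = Inf (rs ` (pr ` S))" by (simp add: image_image)
  finally show ?thesis unfolding FS rs_def .
qed

theorem mainTheorem8:
  fixes P Q :: "'a::finite \<Rightarrow> real" and \<alpha> \<delta> :: real
  assumes "\<alpha> > 1" and "0 \<le> \<delta>" and "\<delta> < 1"
    and "is_dist P" and "is_dist Q"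
  shows "exp_ereal (ereal (\<alpha> - 1) * smooth_renyi \<alpha> \<delta> P Q)
           = (INF (P', Q') \<in> {(P', Q'). smooth_feasible \<delta> P Q P' Q'}. renyi_sum \<alpha> P' Q')
    \<and> (\<forall>P1 Q1 P1' Q1' P2 Q2 P2' Q2' :: 'a \<Rightarrow> real. \<forall>t.
          (P1, Q1, P1', Q1') \<in> joint_feasible \<delta> \<longrightarrow>
          (P2, Q2, P2', Q2') \<in> joint_feasible \<delta> \<longrightarrow> 0 \<le> t \<longrightarrow> t \<le> 1 \<longrightarrow>
          (cmix t P1 P2, cmix t Q1 Q2, cmix t P1' P2', cmix t Q1' Q2') \<in> joint_feasible \<delta> \<and>
          renyi_sum \<alpha> (cmix t P1' P2') (cmix t Q1' Q2')
            \<le> ereal t * renyi_sum \<alpha> P1' Q1' + ereal (1 - t) * renyi_sum \<alpha> P2' Q2')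
    \<and> (\<forall>P1 Q1 P2 Q2 :: 'a \<Rightarrow> real. \<forall>t.
          is_dist P1 \<longrightarrow> is_dist Q1 \<longrightarrow> is_dist P2 \<longrightarrow> is_dist Q2 \<longrightarrow> 0 \<le> t \<longrightarrow> t \<le> 1 \<longrightarrow>
          exp_ereal (ereal (\<alpha> - 1) * smooth_renyi \<alpha> \<delta> (cmix t P1 P2) (cmix t Q1 Q2))
            \<le> ereal t * exp_ereal (ereal (\<alpha> - 1) * smooth_renyi \<alpha> \<delta> P1 Q1)
              + ereal (1 - t) * exp_ereal (ereal (\<alpha> - 1) * smooth_renyi \<alpha> \<delta> P2 Q2))"
proof -
  have a1: "\<alpha> \<ge> 1" using assms(1) by simp
  have B: "\<forall>P1 Q1 P1' Q1' P2 Q2 P2' Q2' :: 'a \<Rightarrow> real. \<forall>t.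
          (P1, Q1, P1', Q1') \<in> joint_feasible \<delta> \<longrightarrow>
          (P2, Q2, P2', Q2') \<in> joint_feasible \<delta> \<longrightarrow> 0 \<le> t \<longrightarrow> t \<le> 1 \<longrightarrow>
          (cmix t P1 P2, cmix t Q1 Q2, cmix t P1' P2', cmix t Q1' Q2') \<in> joint_feasible \<delta> \<and>
          renyi_sum \<alpha> (cmix t P1' P2') (cmix t Q1' Q2')
            \<le> ereal t * renyi_sum \<alpha> P1' Q1' + ereal (1 - t) * renyi_sum \<alpha> P2' Q2'"
  proof (intro allI impI conjI)
    fix P1 Q1 P1' Q1' P2 Q2 P2' Q2' :: "'a \<Rightarrow> real" and t :: real
    assume j1: "(P1, Q1, P1', Q1') \<in> joint_feasible \<delta>" and j2: "(P2, Q2, P2', Q2') \<in> joint_feasible \<delta>"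
      and t: "0 \<le> t" "t \<le> 1"
    from j1 have h1: "is_dist P1" "is_dist Q1" "smooth_feasible \<delta> P1 Q1 P1' Q1'"
      unfolding joint_feasible_def by auto
    from j2 have h2: "is_dist P2" "is_dist Q2" "smooth_feasible \<delta> P2 Q2 P2' Q2'"
      unfolding joint_feasible_def by auto
    show "(cmix t P1 P2, cmix t Q1 Q2, cmix t P1' P2', cmix t Q1' Q2') \<in> joint_feasible \<delta>"
      unfolding joint_feasible_def using dist_cmix[OF h1(1) h2(1) t] dist_cmix[OF h1(2) h2(2) t]
        feas_cmix[OF h1(3) h2(3) t assms(3)] by auto
    show "renyi_sum \<alpha> (cmix t P1' P2') (cmix t Q1' Q2')
            \<le> ereal t * renyi_sum \<alpha> P1' Q1' + ereal (1 - t) * renyi_sum \<alpha> P2' Q2'"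
      using h1(3) h2(3) unfolding smooth_feasible_def by (intro rs_convex a1 t) auto
  qed
  define rs where "rs = (\<lambda>(P'::'a\<Rightarrow>real, Q'::'a\<Rightarrow>real). renyi_sum \<alpha> P' Q')"
  define Fe where "Fe = (\<lambda>P Q :: 'a \<Rightarrow> real. {(P', Q'). smooth_feasible \<delta> P Q P' Q'})"
  have rs0: "0 \<le> rs z" for z unfolding rs_def by (cases z) (simp add: rs_nonneg)
  have P1: "exp_ereal (ereal (\<alpha> - 1) * smooth_renyi \<alpha> \<delta> P Q) = Inf (rs ` Fe P Q)"
    if "is_dist P" "is_dist Q" for P Q :: "'a \<Rightarrow> real"
    unfolding rs_def Fe_def using part1[OF assms(1,2,3) that] .
  have C: "\<forall>P1 Q1 P2 Q2 :: 'a \<Rightarrow> real. \<forall>t.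
          is_dist P1 \<longrightarrow> is_dist Q1 \<longrightarrow> is_dist P2 \<longrightarrow> is_dist Q2 \<longrightarrow> 0 \<le> t \<longrightarrow> t \<le> 1 \<longrightarrow>
          exp_ereal (ereal (\<alpha> - 1) * smooth_renyi \<alpha> \<delta> (cmix t P1 P2) (cmix t Q1 Q2))
            \<le> ereal t * exp_ereal (ereal (\<alpha> - 1) * smooth_renyi \<alpha> \<delta> P1 Q1)
              + ereal (1 - t) * exp_ereal (ereal (\<alpha> - 1) * smooth_renyi \<alpha> \<delta> P2 Q2)"
  proof (intro allI impI)
    fix P1 Q1 P2 Q2 :: "'a \<Rightarrow> real" and t :: real
    assume d: "is_dist P1" "is_dist Q1" "is_dist P2" "is_dist Q2" and t: "0 \<le> t" "t \<le> 1"
    consider "t = 0" | "t = 1" | "0 < t" "t < 1" using t by linarith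
    then show "exp_ereal (ereal (\<alpha> - 1) * smooth_renyi \<alpha> \<delta> (cmix t P1 P2) (cmix t Q1 Q2))
            \<le> ereal t * exp_ereal (ereal (\<alpha> - 1) * smooth_renyi \<alpha> \<delta> P1 Q1)
              + ereal (1 - t) * exp_ereal (ereal (\<alpha> - 1) * smooth_renyi \<alpha> \<delta> P2 Q2)"
    proof cases
      case 1
      then have "cmix t P1 P2 = P2" "cmix t Q1 Q2 = Q2" by (auto simp: cmix_def)
      then show ?thesis using 1 by (simp add: zero_ereal_def[symmetric] one_ereal_def[symmetric])
    next
      case 2
      then have "cmix t P1 P2 = P1" "cmix t Q1 Q2 = Q1" by (auto simp: cmix_def)
      then show ?thesis using 2 by (simp add: zero_ereal_def[symmetric] one_ereal_def[symmetric])
    next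
      case 3
      have ne1: "Fe P1 Q1 \<noteq> {}" using self_feasible[OF d(1,2) assms(2,3)] unfolding Fe_def by auto
      have ne2: "Fe P2 Q2 \<noteq> {}" using self_feasible[OF d(3,4) assms(2,3)] unfolding Fe_def by auto
      define L where "L = Inf (rs ` Fe (cmix t P1 P2) (cmix t Q1 Q2))"
      have key: "L \<le> ereal t * rs a + ereal (1 - t) * rs b"
        if "a \<in> Fe P1 Q1" "b \<in> Fe P2 Q2" for a b
      proof -
        obtain a1 a2 where a: "a = (a1, a2)" by (cases a)
        obtain b1 b2 where b: "b = (b1, b2)" by (cases b)
        have fa: "smooth_feasible \<delta> P1 Q1 a1 a2" using that a unfolding Fe_def by auto
        have fb: "smooth_feasible \<delta> P2 Q2 b1 b2" using that b unfolding Fe_def by auto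
        have "(cmix t a1 b1, cmix t a2 b2) \<in> Fe (cmix t P1 P2) (cmix t Q1 Q2)"
          unfolding Fe_def using feas_cmix[OF fa fb t assms(3)] by auto
        then have "L \<le> rs (cmix t a1 b1, cmix t a2 b2)" unfolding L_def by (rule INF_lower)
        also have "\<dots> \<le> ereal t * rs a + ereal (1 - t) * rs b"
          unfolding a b rs_def using fa fb unfolding smooth_feasible_def
          by (simp only: case_prod_conv) (intro rs_convex a1 t; auto)
        finally show ?thesis .
      qed
      have step1: "L \<le> ereal t * Inf (rs ` Fe P1 Q1) + ereal (1 - t) * rs b"
        if "b \<in> Fe P2 Q2" for b
      proof -
        have "L \<le> (INF a\<in>Fe P1 Q1. ereal t * rs a + ereal (1 - t) * rs b)"
          by (rule INF_greatest) (rule key[OF _ that])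
        also have "\<dots> = (INF a\<in>Fe P1 Q1. ereal t * rs a) + ereal (1 - t) * rs b"
          using 3 rs0 ne1 by (intro INF_ereal_add_left) auto
        also have "(INF a\<in>Fe P1 Q1. ereal t * rs a) = ereal t * Inf (rs ` Fe P1 Q1)"
          using 3 by (subst mult_iso) (simp_all add: image_image)
        finally show ?thesis .
      qed
      have Inf1: "0 \<le> Inf (rs ` Fe P1 Q1)" by (rule Inf_greatest) (auto simp: rs0)
      have "L \<le> (INF b\<in>Fe P2 Q2. ereal t * Inf (rs ` Fe P1 Q1) + ereal (1 - t) * rs b)"
        by (rule INF_greatest) (rule step1)
      also have "\<dots> = ereal t * Inf (rs ` Fe P1 Q1) + (INF b\<in>Fe P2 Q2. ereal (1 - t) * rs b)"
        using 3 rs0 ne2 Inf1 by (intro INF_ereal_add_right) auto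
      also have "(INF b\<in>Fe P2 Q2. ereal (1 - t) * rs b) = ereal (1 - t) * Inf (rs ` Fe P2 Q2)"
        using 3 by (subst mult_iso) (simp_all add: image_image)
      finally have "L \<le> ereal t * Inf (rs ` Fe P1 Q1) + ereal (1 - t) * Inf (rs ` Fe P2 Q2)" .
      then show ?thesis unfolding L_def
        using P1[OF d(1,2)] P1[OF d(3,4)] P1[OF dist_cmix[OF d(1,3) t] dist_cmix[OF d(2,4) t]]
        by simp
    qed
  qed
  show ?thesis using part1[OF assms] B C by blast
qed

end
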